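(* Let $k\ge 2$ be an integer and let $\mathcal{M}_k:(1,+\infty)^k\to\mathbb{R}$ be defined by $$\mathcal{M}_k(x_1,\ldots,x_k)=\int_{[0,1]^{k-1}} (x_1-1)^{t_1}(x_2-1)^{t_2}\cdots(x_{k-1}-1)^{t_{k-1}}(x_k-1)^{1-(t_1+\cdots+t_{k-1})}\,dt_1\cdots dt_{k-1}.$$ Then for all $x_1,\ldots,x_k\in(1,+\infty)$ with $x_i\neq x_k$ for $i=1,\ldots,k-1$, $$\mathcal{M}_k(x_1,\ldots,x_k)=\frac{(x_1-x_k)(x_2-x_k)\cdots(x_{k-1}-x_k)}{(x_k-1)^{k-2}\log\left(\frac{x_1-1}{x_k-1}\right)\cdots\log\left(\frac{x_{k-1}-1}{x_k-1}\right)}.$$ *)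

theory Defs
  imports "HOL-Analysis.Analysis"
begin

definition M :: "nat \<Rightarrow> (nat \<Rightarrow> real) \<Rightarrow> real" where
  "M k x = (LINT t : PiE {1..k-1} (\<lambda>_. {0..1::real}) | PiM {1..k-1} (\<lambda>_. lborel).
      (\<Prod>i\<in>{1..k-1}. (x i - 1) powr (t i)) * (x k - 1) powr (1 - (\<Sum>i\<in>{1..k-1}. t i)))"

end

theory Submission
  imports Defs
begin

lemma one_dim:
  fixes r :: real assumes "r > 0" "r \<noteq> 1"
  shows "integrable lborel (\<lambda>s. r powr s * indicator {0..1} s)"
    and "integral\<^sup>L lborel (\<lambda>s. r powr s * indicator {0..1} s) = (r - 1) / ln r"
proof -
  have ln: "ln r \<noteq> 0" using assms by simp
  have d: "DERIV (\<lambda>s. r powr s / ln r) s :> r powr s" for s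
    using assms ln by (auto intro!: derivative_eq_intros)
  have c: "isCont (\<lambda>s. r powr s) s" for s
    using assms by (auto intro!: continuous_intros)
  show "integrable lborel (\<lambda>s. r powr s * indicator {0..1} s)"
    by (rule borel_integrable_atLeastAtMost) (use c in auto)
  have "integral\<^sup>L lborel (\<lambda>s. r powr s * indicator {0..1} s) = r powr 1 / ln r - r powr 0 / ln r"
    by (rule integral_FTC_Icc_real) (use d c in auto)
  also have "\<dots> = (r - 1) / ln r" using assms by (simp add: diff_divide_distrib)
  finally show "integral\<^sup>L lborel (\<lambda>s. r powr s * indicator {0..1} s) = (r - 1) / ln r" .
qed

theorem mainTheorem7:
  fixes k :: nat and x :: "nat \<Rightarrow> real"
  assumes "k \<ge> 2"
    and "\<And>i. i \<in> {1..k} \<Longrightarrow> x i > 1"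
    and "\<And>i. i \<in> {1..k-1} \<Longrightarrow> x i \<noteq> x k"
  shows "M k x = (\<Prod>i\<in>{1..k-1}. x i - x k) /
           ((x k - 1) ^ (k - 2) * (\<Prod>i\<in>{1..k-1}. ln ((x i - 1) / (x k - 1))))"
proof -
  define I where "I = {1..k-1}"
  define c where "c = x k - 1"
  define r where "r i = (x i - 1) / c" for i
  have cpos: "c > 0" using assms(1) assms(2)[of k] by (simp add: c_def)
  have xpos: "x i - 1 > 0" if "i \<in> I" for i using assms(2)[of i] that by (auto simp: I_def)
  have rpos: "r i > 0" if "i \<in> I" for i using xpos[OF that] cpos by (simp add: r_def)
  have rne: "r i \<noteq> 1" if "i \<in> I" for i using assms(3)[of i] that cpos
    by (auto simp: r_def I_def c_def)
  have finI: "finite I" by (simp add: I_def)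
  interpret product_sigma_finite "\<lambda>_::nat. lborel::real measure"
    by unfold_locales
  have "M k x = integral\<^sup>L (PiM I (\<lambda>_. lborel))
      (\<lambda>t. c * (\<Prod>i\<in>I. r i powr t i * indicator {0..1} (t i)))"
    unfolding M_def set_lebesgue_integral_def I_def[symmetric] c_def[symmetric]
  proof (rule Bochner_Integration.integral_cong[OF refl])
    fix t assume t: "t \<in> space (PiM I (\<lambda>_. lborel::real measure))"
    hence ext: "t \<in> extensional I" by (simp add: space_PiM PiE_def)
    show "indicator (PiE I (\<lambda>_. {0..1})) t *\<^sub>R
        ((\<Prod>i\<in>I. (x i - 1) powr t i) * c powr (1 - sum t I)) =
        c * (\<Prod>i\<in>I. r i powr t i * indicator {0..1} (t i))"
    proof (cases "\<forall>i\<in>I. t i \<in> {0..1}")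
      case True
      hence inP: "t \<in> PiE I (\<lambda>_. {0..1})" using ext by (auto simp: PiE_def)
      have "(\<Prod>i\<in>I. r i powr t i * indicator {0..1} (t i)) = (\<Prod>i\<in>I. r i powr t i)"
        using True by (intro prod.cong) auto
      also have "\<dots> = (\<Prod>i\<in>I. (x i - 1) powr t i / c powr t i)"
        by (intro prod.cong) (auto simp: r_def powr_divide)
      also have "\<dots> = (\<Prod>i\<in>I. (x i - 1) powr t i) / c powr (sum t I)"
        using cpos by (simp add: prod_dividef powr_sum)
      finally have e: "(\<Prod>i\<in>I. r i powr t i * indicator {0..1} (t i)) =
          (\<Prod>i\<in>I. (x i - 1) powr t i) / c powr (sum t I)" .
      show ?thesis using inP cpos
        by (simp add: e powr_diff)
    next
      case False
      then obtain j where j: "j \<in> I" "t j \<notin> {0..1}" by auto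
      hence "t \<notin> PiE I (\<lambda>_. {0..1})" by auto
      moreover have "(\<Prod>i\<in>I. r i powr t i * indicator {0..1} (t i)) = 0"
        using j finI by (intro prod_zero bexI[of _ j]) auto
      ultimately show ?thesis by simp
    qed
  qed
  also have "\<dots> = c * (\<Prod>i\<in>I. integral\<^sup>L lborel (\<lambda>s. r i powr s * indicator {0..1} s))"
    by (subst integral_mult_right_zero, subst product_integral_prod[OF finI])
       (use one_dim(1)[OF rpos rne] in auto)
  also have "\<dots> = c * (\<Prod>i\<in>I. (r i - 1) / ln (r i))"
    using one_dim(2)[OF rpos rne] by simp
  also have "\<dots> = c * (\<Prod>i\<in>I. (x i - x k) / c / ln (r i))"
    using cpos by (intro arg_cong2[where f="(*)"] prod.cong refl)
      (simp add: r_def c_def field_simps)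
  also have "\<dots> = c * ((\<Prod>i\<in>I. x i - x k) / (c ^ (k - 1) * (\<Prod>i\<in>I. ln (r i))))"
  proof -
    have "(\<Prod>i\<in>I. (x i - x k) / c / ln (r i)) = (\<Prod>i\<in>I. x i - x k) / ((\<Prod>i\<in>I. c) * (\<Prod>i\<in>I. ln (r i)))"
      by (simp only: divide_divide_eq_left prod_dividef prod.distrib)
    moreover have "(\<Prod>i\<in>I. c) = c ^ (k - 1)" by (simp add: I_def)
    ultimately show ?thesis by simp
  qed
  also have "\<dots> = (\<Prod>i\<in>I. x i - x k) / (c ^ (k - 2) * (\<Prod>i\<in>I. ln (r i)))"
  proof -
    have e: "k - 1 = Suc (k - 2)" using assms(1) by arith
    have "c ^ (k - 1) = c * c ^ (k - 2)" by (simp only: e power_Suc)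
    thus ?thesis using cpos by (simp add: mult.assoc)
  qed
  finally show ?thesis by (simp add: I_def c_def r_def)
qed

end
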